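(* Let $S$ be a numerical semigroup. Then the set of minimal elements of $(\mathrm{Betti}(S),\le_S)$ equals the set of minimal elements of $(\mathcal E(S),\le_S)$. Moreover, for every minimal element $\alpha$ of $(\mathcal E(S),\le_S)$ one has $e_\alpha=\mathfrak d(\alpha)-1=\mathrm i(\alpha)-1$.
   Context: A numerical semigroup $S$ is a submonoid of $(\mathbb N,+)$ with finite complement, with minimal generating set $A=\{n_1,\dots,n_e\}$. The cyclotomic exponent sequence is the unique integer sequence $(e_j)_{j\ge1}$ with $(1-x)\sum_{s\in S}x^s=\prod_{j\ge1}(1-x^j)^{e_j}$ in $\mathbb Z[[x]]$; $\mathcal E(S)=\{d\in\mathbb N: d\ge2,\ e_d\ne0,\ d\notin A\}$. Write $a\le_S b$ if $b-a\in S$. Let $\varphi:\mathbb N^e\to S$, $\varphi(a)=\sum_ia_in_i$; $\mathrm Z(s)=\varphi^{-1}(s)$ and $\mathfrak d(s)=|\mathrm Z(s)|$. $\nabla_s$ is the graph on $\mathrm Z(s)$ with distinct $x,y$ adjacent iff $x\cdot y\ne0$; $s$ is a Betti element if $\nabla_s$ is disconnected, $\mathrm{Betti}(S)$ is the set of Betti elements. A factorization $z\in\mathrm Z(s)$ is isolated if $z\cdot x=0$ for all $x\in\mathrm Z(s)\setminus\{z\}$; $\mathrm i(s)$ is the number of isolated factorizations of $s$. *)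

theory Defs
  imports "HOL-Computational_Algebra.Formal_Power_Series"
begin

definition numerical_semigroup :: "nat set \<Rightarrow> bool" where
  "numerical_semigroup S \<longleftrightarrow> 0 \<in> S \<and> (\<forall>a\<in>S. \<forall>b\<in>S. a + b \<in> S) \<and> finite (UNIV - S)"

inductive_set monoid_closure :: "nat set \<Rightarrow> nat set" for A where
  mc_zero: "0 \<in> monoid_closure A"
| mc_gen: "a \<in> A \<Longrightarrow> a \<in> monoid_closure A"
| mc_add: "x \<in> monoid_closure A \<Longrightarrow> y \<in> monoid_closure A \<Longrightarrow> x + y \<in> monoid_closure A"

text \<open>The minimal generating set (unique for numerical semigroups).\<close>
definition min_gens :: "nat set \<Rightarrow> nat set" where
  "min_gens S = (THE A. monoid_closure A = S \<and> (\<forall>B. B \<subset> A \<longrightarrow> monoid_closure B \<noteq> S))"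

definition le_S :: "nat set \<Rightarrow> nat \<Rightarrow> nat \<Rightarrow> bool" where
  "le_S S a b \<longleftrightarrow> a \<le> b \<and> b - a \<in> S"

definition minimal_elements :: "nat set \<Rightarrow> nat set \<Rightarrow> nat set" where
  "minimal_elements S X = {x \<in> X. \<forall>y\<in>X. le_S S y x \<longrightarrow> y = x}"

text \<open>Hilbert series of S times (1 - x), over the rationals (coefficients are integers).\<close>
definition sg_series :: "nat set \<Rightarrow> rat fps" where
  "sg_series S = (1 - fps_X) * Abs_fps (\<lambda>n. if n \<in> S then 1 else 0)"

definition cyc_factor :: "int \<Rightarrow> nat \<Rightarrow> rat fps" where
  "cyc_factor k j = (if k \<ge> 0 then (1 - fps_X ^ j) ^ nat k
                     else inverse ((1 - fps_X ^ j) ^ nat (- k)))"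

text \<open>Coefficientwise meaning of the infinite product: the n-th coefficient of
  \<Prod>_{j\<ge>1} (1-x^j)^{e_j} is that of the finite product over 1 \<le> j \<le> n.\<close>
definition is_cyc_exp :: "nat set \<Rightarrow> (nat \<Rightarrow> int) \<Rightarrow> bool" where
  "is_cyc_exp S e \<longleftrightarrow> e 0 = 0 \<and>
     (\<forall>n. fps_nth (sg_series S) n = fps_nth (\<Prod>j\<in>{1..n}. cyc_factor (e j) j) n)"

definition cyc_exp :: "nat set \<Rightarrow> nat \<Rightarrow> int" where
  "cyc_exp S = (THE e. is_cyc_exp S e)"

definition cyc_E :: "nat set \<Rightarrow> nat set" where
  "cyc_E S = {d. d \<ge> 2 \<and> cyc_exp S d \<noteq> 0 \<and> d \<notin> min_gens S}"

definition factorizations :: "nat set \<Rightarrow> nat \<Rightarrow> (nat \<Rightarrow> nat) set" where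
  "factorizations S s = {z. (\<forall>a. a \<notin> min_gens S \<longrightarrow> z a = 0)
                          \<and> (\<Sum>a\<in>min_gens S. z a * a) = s}"

definition fdot :: "nat set \<Rightarrow> (nat \<Rightarrow> nat) \<Rightarrow> (nat \<Rightarrow> nat) \<Rightarrow> nat" where
  "fdot S x y = (\<Sum>a\<in>min_gens S. x a * y a)"

definition nabla_edges :: "nat set \<Rightarrow> nat \<Rightarrow> ((nat \<Rightarrow> nat) \<times> (nat \<Rightarrow> nat)) set" where
  "nabla_edges S s = {(x, y). x \<in> factorizations S s \<and> y \<in> factorizations S s
                        \<and> x \<noteq> y \<and> fdot S x y \<noteq> 0}"

definition nabla_connected :: "nat set \<Rightarrow> nat \<Rightarrow> bool" where
  "nabla_connected S s \<longleftrightarrow> (\<forall>x\<in>factorizations S s. \<forall>y\<in>factorizations S s.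
                              (x, y) \<in> (nabla_edges S s)\<^sup>*)"

definition Betti :: "nat set \<Rightarrow> nat set" where
  "Betti S = {s \<in> S. \<not> nabla_connected S s}"

definition num_fact :: "nat set \<Rightarrow> nat \<Rightarrow> nat" where
  "num_fact S s = card (factorizations S s)"

definition isolated_facts :: "nat set \<Rightarrow> nat \<Rightarrow> (nat \<Rightarrow> nat) set" where
  "isolated_facts S s = {z \<in> factorizations S s.
      \<forall>x \<in> factorizations S s - {z}. fdot S z x = 0}"

definition num_isolated :: "nat set \<Rightarrow> nat \<Rightarrow> nat" where
  "num_isolated S s = card (isolated_facts S s)"

end

theory Submission
  imports Defs
begin

unbundle fps_syntax


definition atoms :: "nat set \<Rightarrow> nat set" where
  "atoms S = {a \<in> S. a \<noteq> 0 \<and> (\<forall>x\<in>S. \<forall>y\<in>S. a = x + y \<longrightarrow> x = 0 \<or> y = 0)}"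

lemma ns_0: "numerical_semigroup S \<Longrightarrow> 0 \<in> S"
  by (simp add: numerical_semigroup_def)
lemma ns_add: "numerical_semigroup S \<Longrightarrow> a \<in> S \<Longrightarrow> b \<in> S \<Longrightarrow> a + b \<in> S"
  by (simp add: numerical_semigroup_def)
lemma ns_fin: "numerical_semigroup S \<Longrightarrow> finite (UNIV - S)"
  by (simp add: numerical_semigroup_def)

lemma ns_mult: "numerical_semigroup S \<Longrightarrow> a \<in> S \<Longrightarrow> k * a \<in> S"
  by (induction k) (auto simp: ns_0 ns_add)

lemma closure_sub:
  assumes "numerical_semigroup S" "B \<subseteq> S"
  shows "monoid_closure B \<subseteq> S"
proof
  fix x assume "x \<in> monoid_closure B"
  then show "x \<in> S"
    by (induction rule: monoid_closure.induct) (use assms in \<open>auto simp: ns_0 ns_add\<close>)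
qed

lemma atom_in_closure:
  assumes "numerical_semigroup S" "B \<subseteq> S" "x \<in> monoid_closure B"
  shows "x \<in> atoms S \<longrightarrow> x \<in> B"
  using assms(3)
proof (induction rule: monoid_closure.induct)
  case mc_zero then show ?case by (simp add: atoms_def)
next
  case (mc_gen a) then show ?case by simp
next
  case (mc_add x y)
  have xs: "x \<in> S" "y \<in> S" using closure_sub[OF assms(1,2)] mc_add.hyps by auto
  show ?case
  proof
    assume "x + y \<in> atoms S"
    then have "x = 0 \<or> y = 0" using xs unfolding atoms_def by blast
    then show "x + y \<in> B" using mc_add.IH \<open>x + y \<in> atoms S\<close> by auto
  qed
qed

lemma atoms_sub: "atoms S \<subseteq> S" by (auto simp: atoms_def)

lemma closure_atoms:
  assumes "numerical_semigroup S"
  shows "monoid_closure (atoms S) = S"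
proof
  show "monoid_closure (atoms S) \<subseteq> S" by (rule closure_sub[OF assms atoms_sub])
  show "S \<subseteq> monoid_closure (atoms S)"
  proof
    fix s assume "s \<in> S"
    then show "s \<in> monoid_closure (atoms S)"
    proof (induction s rule: less_induct)
      case (less s)
      show ?case
      proof (cases "s = 0 \<or> s \<in> atoms S")
        case True then show ?thesis by (auto intro: monoid_closure.intros)
      next
        case False
        then obtain x y where "x \<in> S" "y \<in> S" "s = x + y" "x \<noteq> 0" "y \<noteq> 0"
          using less.prems unfolding atoms_def by blast
        then show ?thesis using less.IH[of x] less.IH[of y] by (auto intro: monoid_closure.mc_add)
      qed
    qed
  qed
qed

lemma min_gens_atoms:
  assumes "numerical_semigroup S"
  shows "min_gens S = atoms S"
  unfolding min_gens_def
proof (rule the_equality)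
  show "monoid_closure (atoms S) = S \<and> (\<forall>B. B \<subset> atoms S \<longrightarrow> monoid_closure B \<noteq> S)"
  proof (intro conjI allI impI)
    show "monoid_closure (atoms S) = S" by (rule closure_atoms[OF assms])
    fix B assume B: "B \<subset> atoms S"
    then obtain a where a: "a \<in> atoms S" "a \<notin> B" by blast
    show "monoid_closure B \<noteq> S"
    proof
      assume "monoid_closure B = S"
      then have "a \<in> monoid_closure B" using a atoms_sub by blast
      then show False using atom_in_closure[OF assms _ \<open>a \<in> monoid_closure B\<close>] a B atoms_sub by blast
    qed
  qed
next
  fix A assume A: "monoid_closure A = S \<and> (\<forall>B. B \<subset> A \<longrightarrow> monoid_closure B \<noteq> S)"
  have AS: "A \<subseteq> S" using A by (auto intro: monoid_closure.mc_gen)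
  have "atoms S \<subseteq> A"
    using atom_in_closure[OF assms AS] A atoms_sub by blast
  moreover have "\<not> atoms S \<subset> A" using A closure_atoms[OF assms] by blast
  ultimately show "A = atoms S" by blast
qed

lemma atomD: "a \<in> atoms S \<Longrightarrow> x \<in> S \<Longrightarrow> y \<in> S \<Longrightarrow> a = x + y \<Longrightarrow> x = 0 \<or> y = 0"
  unfolding atoms_def by blast

lemma finite_atoms:
  assumes "numerical_semigroup S"
  shows "finite (atoms S)"
proof -
  have "\<not> finite S"
  proof
    assume "finite S"
    then have "finite (S \<union> (UNIV - S))" using ns_fin[OF assms] by blast
    then show False by simp
  qed
  then obtain m where m: "m \<in> S" "m \<noteq> 0"
    using infinite_imp_nonempty[of "S - {0}"] by auto
  have "atoms S \<subseteq> {..m} \<union> (\<lambda>x. x + m) ` (UNIV - S)"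
  proof
    fix a assume a: "a \<in> atoms S"
    show "a \<in> {..m} \<union> (\<lambda>x. x + m) ` (UNIV - S)"
    proof (cases "a \<le> m")
      case False
      have "a - m \<notin> S"
      proof
        assume "a - m \<in> S"
        then have "m = 0 \<or> a - m = 0"
        proof -
          have "a = m + (a - m)" using False by simp
          then show ?thesis by (rule atomD[OF a m(1) \<open>a - m \<in> S\<close>])
        qed
        then show False using m False by auto
      qed
      then show ?thesis using False by (auto intro!: image_eqI[of _ _ "a - m"])
    qed simp
  qed
  moreover have "finite ({..m} \<union> (\<lambda>x. x + m) ` (UNIV - S))" using ns_fin[OF assms] by simp
  ultimately show ?thesis by (rule finite_subset)
qed

lemma atoms_pos: "a \<in> atoms S \<Longrightarrow> a \<noteq> 0" by (simp add: atoms_def)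



locale nsg = fixes S assumes ns: "numerical_semigroup S"
begin

abbreviation "AT \<equiv> atoms S"

definition fz :: "nat \<Rightarrow> (nat \<Rightarrow> nat) set" where
  "fz s = {z. (\<forall>a. a \<notin> AT \<longrightarrow> z a = 0) \<and> (\<Sum>a\<in>AT. z a * a) = s}"

definition D2 :: "nat set" where
  "D2 = {s. \<exists>x\<in>fz s. \<exists>y\<in>fz s. x \<noteq> y}"

lemma finA: "finite AT" by (rule finite_atoms[OF ns])

lemma fact_eq: "factorizations S s = fz s"
  unfolding factorizations_def fz_def min_gens_atoms[OF ns] ..

lemma fdot_eq: "fdot S x y = (\<Sum>a\<in>AT. x a * y a)"
  unfolding fdot_def min_gens_atoms[OF ns] ..

lemma fdot_nz: "fdot S x y \<noteq> 0 \<longleftrightarrow> (\<exists>a\<in>AT. x a > 0 \<and> y a > 0)"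
  unfolding fdot_eq using finA by (simp add: sum_eq_0_iff)

lemma fin_fz: "finite (fz s)"
proof -
  have "fz s \<subseteq> (\<lambda>g a. if a \<in> AT then g a else 0) ` (PiE AT (\<lambda>_. {..s}))"
  proof
    fix z assume z: "z \<in> fz s"
    have le: "z a \<le> s" if "a \<in> AT" for a
    proof -
      have "a \<noteq> 0" using that atoms_pos by blast
      then have "z a \<le> z a * a" by simp
      also have "\<dots> \<le> (\<Sum>b\<in>AT. z b * b)" using that finA by (intro member_le_sum) auto
      finally show ?thesis using z by (simp add: fz_def)
    qed
    have "z = (\<lambda>a. if a \<in> AT then restrict z AT a else 0)" using z by (auto simp: fz_def)
    moreover have "restrict z AT \<in> PiE AT (\<lambda>_. {..s})" using le by auto
    ultimately show "z \<in> (\<lambda>g a. if a \<in> AT then g a else 0) ` (PiE AT (\<lambda>_. {..s}))" by blast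
  qed
  moreover have "finite (PiE AT (\<lambda>_. {..s}))" using finA by (simp add: finite_PiE)
  ultimately show ?thesis by (meson finite_imageI finite_subset)
qed

lemma sum_in_S_gen: "finite B \<Longrightarrow> B \<subseteq> S \<Longrightarrow> (\<Sum>b\<in>B. f b * b) \<in> S"
  by (induction B rule: finite_induct) (auto simp: ns_0[OF ns] ns_add[OF ns] ns_mult[OF ns])

lemma sum_in_S: "(\<Sum>b\<in>B. f b * b) \<in> S" if "B \<subseteq> AT"
  using sum_in_S_gen[of B f] that finA atoms_sub by (meson finite_subset order_trans)

lemma fz_S: "z \<in> fz s \<Longrightarrow> s \<in> S"
  using sum_in_S[of AT z] by (auto simp: fz_def)

lemma fz_add: "x \<in> fz s \<Longrightarrow> y \<in> fz t \<Longrightarrow> (\<lambda>a. x a + y a) \<in> fz (s + t)"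
  by (auto simp: fz_def sum.distrib algebra_simps)

definition dl :: "nat \<Rightarrow> nat \<Rightarrow> nat" where "dl a = (\<lambda>b. if b = a then 1 else 0)"

lemma dl_fz: "a \<in> AT \<Longrightarrow> dl a \<in> fz a"
proof -
  assume a: "a \<in> AT"
  have "(\<Sum>b\<in>AT. dl a b * b) = (\<Sum>b\<in>AT. if b = a then a else 0)"
    by (rule sum.cong) (auto simp: dl_def)
  also have "\<dots> = a" using a finA by (simp add: sum.delta)
  finally have "(\<Sum>b\<in>AT. dl a b * b) = a" .
  then show ?thesis using a by (auto simp: fz_def dl_def)
qed

lemma fz0: "fz 0 = {\<lambda>_. 0}"
proof -
  have "z = (\<lambda>_. 0)" if "z \<in> fz 0" for z
  proof
    fix a show "z a = 0"
    proof (cases "a \<in> AT")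
      case True
      then have "z a * a = 0" using that finA by (auto simp: fz_def sum_eq_0_iff)
      then show ?thesis using True atoms_pos by auto
    qed (use that in \<open>auto simp: fz_def\<close>)
  qed
  then show ?thesis by (auto simp: fz_def)
qed

lemma fz_ne: "s \<in> S \<Longrightarrow> fz s \<noteq> {}"
proof -
  assume "s \<in> S"
  then have "s \<in> monoid_closure AT" using closure_atoms[OF ns] by simp
  then show "fz s \<noteq> {}"
  proof (induction rule: monoid_closure.induct)
    case mc_zero then show ?case using fz0 by simp
  next
    case (mc_gen a) then show ?case using dl_fz by blast
  next
    case (mc_add x y) then show ?case using fz_add by blast
  qed
qed

lemma fz_sub:
  assumes x: "x \<in> fz s" and a: "a \<in> AT" and pos: "x a > 0"
  shows "x(a := x a - 1) \<in> fz (s - a)" and "a \<le> s"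
proof -
  have s: "s = x a * a + (\<Sum>b\<in>AT - {a}. x b * b)"
    using x a finA by (simp add: fz_def sum.remove)
  have s2: "(\<Sum>b\<in>AT. (x(a := x a - 1)) b * b) = (x a - 1) * a + (\<Sum>b\<in>AT - {a}. x b * b)"
    using a finA by (simp add: sum.remove)
  have "x a * a = (x a - 1) * a + a" using pos by (cases "x a") auto
  then show "x(a := x a - 1) \<in> fz (s - a)" "a \<le> s" using s s2 x a atoms_pos[OF a] by (auto simp: fz_def)
qed

lemma fz_unique: "s \<in> S \<Longrightarrow> s \<notin> D2 \<Longrightarrow> card (fz s) = 1"
proof -
  assume "s \<in> S" "s \<notin> D2"
  then obtain z where "z \<in> fz s" using fz_ne by blast
  moreover have "\<forall>y\<in>fz s. y = z" using \<open>s \<notin> D2\<close> \<open>z \<in> fz s\<close> by (auto simp: D2_def)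
  ultimately have "fz s = {z}" by blast
  then show ?thesis by simp
qed

lemma D2_card: "s \<in> D2 \<Longrightarrow> 2 \<le> card (fz s)"
proof -
  assume "s \<in> D2"
  then obtain x y where "x \<in> fz s" "y \<in> fz s" "x \<noteq> y" by (auto simp: D2_def)
  then have "{x, y} \<subseteq> fz s" by auto
  then have "card {x,y} \<le> card (fz s)" using fin_fz by (rule card_mono[rotated])
  then show ?thesis using \<open>x \<noteq> y\<close> by simp
qed

lemma D2_S: "s \<in> D2 \<Longrightarrow> s \<in> S" using fz_S by (auto simp: D2_def)

lemma zero_notin_D2: "0 \<notin> D2" using fz0 by (auto simp: D2_def)

lemma D2_up: "s \<in> D2 \<Longrightarrow> t \<in> S \<Longrightarrow> s + t \<in> D2"
proof -
  assume "s \<in> D2" "t \<in> S"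
  then obtain x y where xy: "x \<in> fz s" "y \<in> fz s" "x \<noteq> y"
    by (auto simp: D2_def)
  obtain w where w: "w \<in> fz t" using fz_ne \<open>t \<in> S\<close> by blast
  have "(\<lambda>a. x a + w a) \<noteq> (\<lambda>a. y a + w a)"
  proof
    assume "(\<lambda>a. x a + w a) = (\<lambda>a. y a + w a)"
    then have "x = y" by (auto simp: fun_eq_iff dest: fun_cong)
    then show False using xy by simp
  qed
  then show "s + t \<in> D2" using fz_add[OF xy(1) w] fz_add[OF xy(2) w] by (auto simp: D2_def)
qed


lemma atom_fz: "a \<in> AT \<Longrightarrow> fz a = {dl a}"
proof -
  assume a: "a \<in> AT"
  have "z = dl a" if z: "z \<in> fz a" for z
  proof (cases "z a = 0")
    case True
    have sa: "a = (\<Sum>b\<in>AT - {a}. z b * b)"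
      using z a finA True by (simp add: fz_def sum.remove)
    then have "(\<Sum>b\<in>AT - {a}. z b * b) \<noteq> 0" using atoms_pos[OF a] by simp
    then obtain b where b: "b \<in> AT - {a}" "z b * b \<noteq> 0" using finA
      by (meson sum.neutral)
    then have "z b > 0" by simp
    from fz_sub[OF z _ this] b have r: "z(b := z b - 1) \<in> fz (a - b)" "b \<le> a" by auto
    have "a = b + (a - b)" using r by simp
    from atomD[OF a _ fz_S[OF r(1)] this] b atoms_sub atoms_pos have "a - b = 0" by blast
    then have "a = b" using r by simp
    then show ?thesis using b by simp
  next
    case False
    have s: "a = z a * a + (\<Sum>b\<in>AT - {a}. z b * b)"
      using z a finA by (simp add: fz_def sum.remove)
    then have "z a * a \<le> a" by linarith
    then have za: "z a = 1" using False atoms_pos[OF a] by (cases "z a") auto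
    then have "(\<Sum>b\<in>AT - {a}. z b * b) = 0" using s by simp
    then have "\<forall>b\<in>AT - {a}. z b * b = 0" using finA by simp
    then have "\<forall>b\<in>AT - {a}. z b = 0" using atoms_pos[of _ S] by auto
    then show ?thesis using za z by (auto simp: dl_def fz_def fun_eq_iff)
  qed
  then show ?thesis using dl_fz[OF a] by blast
qed

lemma atom_notin_D2: "a \<in> AT \<Longrightarrow> a \<notin> D2"
  using atom_fz by (auto simp: D2_def)

end


context nsg
begin

lemma le_S_refl: "le_S S x x" using ns_0[OF ns] by (simp add: le_S_def)

lemma le_S_trans: "le_S S a b \<Longrightarrow> le_S S b c \<Longrightarrow> le_S S a c"
proof -
  assume "le_S S a b" "le_S S b c"
  then have h: "a \<le> c" "(c - b) + (b - a) = c - a" "c - b \<in> S" "b - a \<in> S" by (auto simp: le_S_def)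
  have "(c - b) + (b - a) \<in> S" by (rule ns_add[OF ns h(3,4)])
  then show ?thesis using h(1,2) by (simp add: le_S_def)
qed

lemma exists_min: "x \<in> X \<Longrightarrow> \<exists>m\<in>minimal_elements S X. le_S S m x"
proof (induction x rule: less_induct)
  case (less x)
  show ?case
  proof (cases "x \<in> minimal_elements S X")
    case True then show ?thesis using le_S_refl by blast
  next
    case False
    then obtain y where y: "y \<in> X" "le_S S y x" "y \<noteq> x" using less.prems
      by (auto simp: minimal_elements_def)
    then have "y < x" by (auto simp: le_S_def)
    then obtain m where "m \<in> minimal_elements S X" "le_S S m y" using less.IH y by blast
    then show ?thesis using le_S_trans y by blast
  qed
qed

abbreviation "mD2 \<equiv> minimal_elements S D2"

lemma minimal_eq:
  assumes "X \<subseteq> D2" "mD2 \<subseteq> X"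
  shows "minimal_elements S X = mD2"
proof
  show "minimal_elements S X \<subseteq> mD2"
  proof
    fix x assume x: "x \<in> minimal_elements S X"
    then have "x \<in> D2" using assms by (auto simp: minimal_elements_def)
    then obtain m where m: "m \<in> mD2" "le_S S m x" using exists_min by blast
    then have "m = x" using x assms by (auto simp: minimal_elements_def)
    then show "x \<in> mD2" using m by simp
  qed
  show "mD2 \<subseteq> minimal_elements S X"
    using assms by (auto simp: minimal_elements_def)
qed

lemma mD2_no_edge:
  assumes m: "m \<in> mD2" and x: "x \<in> fz m" and y: "y \<in> fz m" and xy: "x \<noteq> y"
  shows "fdot S x y = 0"
proof (rule ccontr)
  assume "fdot S x y \<noteq> 0"
  then obtain a where a: "a \<in> AT" "x a > 0" "y a > 0" using fdot_nz by blast
  have x': "x(a := x a - 1) \<in> fz (m - a)" "a \<le> m" using fz_sub[OF x a(1) a(2)] by auto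
  have y': "y(a := y a - 1) \<in> fz (m - a)" using fz_sub[OF y a(1) a(3)] by auto
  have "x(a := x a - 1) \<noteq> y(a := y a - 1)"
  proof
    assume h: "x(a := x a - 1) = y(a := y a - 1)"
    have "x b = y b" for b
    proof (cases "b = a")
      case True then show ?thesis using fun_cong[OF h, of a] a by simp
    next
      case False then show ?thesis using fun_cong[OF h, of b] by simp
    qed
    then show False using xy by auto
  qed
  then have "m - a \<in> D2" using x'(1) y' unfolding D2_def by blast
  moreover have "le_S S (m - a) m"
  proof -
    have "m - (m - a) = a" using x'(2) by simp
    then show ?thesis using a(1) atoms_sub by (auto simp: le_S_def)
  qed
  ultimately have "m - a = m" using m unfolding minimal_elements_def by blast
  then show False using x' atoms_pos[OF a(1)] by simp
qed

lemma Betti_D2: "Betti S \<subseteq> D2"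
proof
  fix s assume "s \<in> Betti S"
  then have "\<not> nabla_connected S s" by (simp add: Betti_def)
  then obtain x y where xy: "x \<in> factorizations S s" "y \<in> factorizations S s" "(x, y) \<notin> (nabla_edges S s)\<^sup>*"
    unfolding nabla_connected_def by blast
  have "x \<noteq> y"
  proof
    assume "x = y" then show False using xy(3) by simp
  qed
  moreover have "x \<in> fz s" "y \<in> fz s" using xy fact_eq by auto
  ultimately show "s \<in> D2" unfolding D2_def by blast
qed

lemma mD2_Betti: "mD2 \<subseteq> Betti S"
proof
  fix m assume m: "m \<in> mD2"
  then have "m \<in> D2" by (simp add: minimal_elements_def)
  then obtain x y where xy: "x \<in> fz m" "y \<in> fz m" "x \<noteq> y" by (auto simp: D2_def)
  have "nabla_edges S m = {}"
  proof (rule equals0I)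
    fix p assume p: "p \<in> nabla_edges S m"
    obtain u v where p': "p = (u, v)" by (cases p)
    have h: "u \<in> fz m" "v \<in> fz m" "u \<noteq> v" "fdot S u v \<noteq> 0"
      using p unfolding p' nabla_edges_def fact_eq by auto
    show False using mD2_no_edge[OF m h(1,2,3)] h(4) by simp
  qed
  then have "(x, y) \<notin> (nabla_edges S m)\<^sup>*" using xy(3) by simp
  moreover have "x \<in> factorizations S m" "y \<in> factorizations S m" using xy fact_eq by auto
  ultimately have "\<not> nabla_connected S m" unfolding nabla_connected_def by blast
  then show "m \<in> Betti S" using D2_S[OF \<open>m \<in> D2\<close>] by (simp add: Betti_def)
qed

lemma min_Betti: "minimal_elements S (Betti S) = mD2"
  by (rule minimal_eq[OF Betti_D2 mD2_Betti])

lemma mD2_isolated: "m \<in> mD2 \<Longrightarrow> num_isolated S m = num_fact S m"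
proof -
  assume m: "m \<in> mD2"
  have "isolated_facts S m = factorizations S m"
  proof
    show "isolated_facts S m \<subseteq> factorizations S m" by (auto simp: isolated_facts_def)
    show "factorizations S m \<subseteq> isolated_facts S m"
    proof
      fix z assume z: "z \<in> factorizations S m"
      have "\<forall>x\<in>factorizations S m - {z}. fdot S z x = 0"
      proof
        fix x assume "x \<in> factorizations S m - {z}"
        then have "x \<in> fz m" "z \<noteq> x" unfolding fact_eq by auto
        then show "fdot S z x = 0" using mD2_no_edge[OF m, of z x] z unfolding fact_eq by simp
      qed
      then show "z \<in> isolated_facts S m" using z unfolding isolated_facts_def by blast
    qed
  qed
  then show ?thesis by (simp add: num_isolated_def num_fact_def)
qed

end


abbreviation Qp :: "(nat \<Rightarrow> int) \<Rightarrow> nat \<Rightarrow> rat fps" where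
  "Qp c n \<equiv> \<Prod>j\<in>{1..n}. cyc_factor (c j) j"

definition gser :: "nat \<Rightarrow> rat fps" where
  "gser j = Abs_fps (\<lambda>n. if j dvd n then 1 else 0)"

lemma gser_mult: "1 \<le> j \<Longrightarrow> gser j * (1 - fps_X ^ j) = 1"
proof (rule fps_ext)
  fix n assume j: "1 \<le> j"
  have "(gser j * (1 - fps_X ^ j)) $ n = gser j $ n - (gser j * fps_X ^ j) $ n"
    by (simp add: algebra_simps)
  also have "\<dots> = (1 :: rat fps) $ n"
  proof (cases "n < j")
    case True
    then show ?thesis using j by (cases "n = 0") (auto simp: gser_def fps_X_power_mult_right_nth dest: dvd_imp_le)
  next
    case False
    then have "j dvd (n - j) \<longleftrightarrow> j dvd n" by (simp add: dvd_diff_nat dvd_minus_self)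
    then show ?thesis using False j by (auto simp: gser_def fps_X_power_mult_right_nth)
  qed
  finally show "(gser j * (1 - fps_X ^ j)) $ n = (1 :: rat fps) $ n" .
qed

lemma inv_gser: "1 \<le> j \<Longrightarrow> inverse (1 - fps_X ^ j :: rat fps) = gser j"
proof -
  assume j: "1 \<le> j"
  let ?u = "1 - fps_X ^ j :: rat fps"
  have u0: "?u $ 0 \<noteq> 0" using j by simp
  have "gser j = gser j * (?u * inverse ?u)" using inverse_mult_eq_1'[OF u0] by simp
  also have "\<dots> = (gser j * ?u) * inverse ?u" by (simp add: mult.assoc)
  also have "\<dots> = inverse ?u" using gser_mult[OF j] by simp
  finally show ?thesis by simp
qed

lemma cyc_factor_alt: "1 \<le> j \<Longrightarrow> cyc_factor k j = (if k \<ge> 0 then (1 - fps_X ^ j) ^ nat k else gser j ^ nat (- k))"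
  by (simp add: cyc_factor_def fps_inverse_power inv_gser)

definition lowf :: "nat \<Rightarrow> int \<Rightarrow> rat fps \<Rightarrow> bool" where
  "lowf j k F \<longleftrightarrow> F $ 0 = 1 \<and> (\<forall>i. 0 < i \<and> i < j \<longrightarrow> F $ i = 0) \<and> F $ j = - of_int k"

lemma sum_split_ends: "1 \<le> (j::nat) \<Longrightarrow> (\<Sum>t=0..j. g t) = g 0 + g j + (\<Sum>t\<in>{1..<j}. g t)"
proof -
  assume j: "1 \<le> j"
  have "{0..j} = {0, j} \<union> {1..<j}" using j by auto
  moreover have "(\<Sum>t\<in>{0, j} \<union> {1..<j}. g t) = (\<Sum>t\<in>{0, j}. g t) + (\<Sum>t\<in>{1..<j}. g t)"
    by (rule sum.union_disjoint) auto
  ultimately have "(\<Sum>t=0..j. g t) = (\<Sum>t\<in>{0, j}. g t) + (\<Sum>t\<in>{1..<j}. g t)"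
    by simp
  then show ?thesis using j by simp
qed

lemma mult_low1:
  assumes "lowf j k G" "m < j"
  shows "(F * G) $ m = F $ m"
proof -
  have "(F * G) $ m = (\<Sum>t=0..m. F $ t * G $ (m - t))" by (simp add: fps_mult_nth)
  also have "\<dots> = (\<Sum>t=0..m. if t = m then F $ m else 0)"
  proof (rule sum.cong)
    fix t assume t: "t \<in> {0..m}"
    show "F $ t * G $ (m - t) = (if t = m then F $ m else 0)"
      using assms t by (auto simp: lowf_def)
  qed simp
  also have "\<dots> = F $ m" by simp
  finally show ?thesis .
qed

lemma mult_low2:
  assumes "lowf j k G" "1 \<le> j"
  shows "(F * G) $ j = F $ j - of_int k * F $ 0"
proof -
  have "(F * G) $ j = (\<Sum>t=0..j. F $ t * G $ (j - t))" by (simp add: fps_mult_nth)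
  also have "\<dots> = F $ 0 * G $ j + F $ j * G $ 0 + (\<Sum>t\<in>{1..<j}. F $ t * G $ (j - t))"
    using sum_split_ends[OF assms(2), where g="\<lambda>t. F $ t * G $ (j - t)"] by simp
  also have "(\<Sum>t\<in>{1..<j}. F $ t * G $ (j - t)) = 0"
    using assms by (intro sum.neutral) (auto simp: lowf_def)
  finally show ?thesis using assms by (simp add: lowf_def)
qed

lemma lowf_mult:
  assumes "lowf j k F" "lowf j l G" "1 \<le> j"
  shows "lowf j (k + l) (F * G)"
proof -
  have "(F * G) $ i = 0" if "0 < i" "i < j" for i
    using mult_low1[OF assms(2) that(2), of F] assms(1) that by (simp add: lowf_def)
  moreover have "(F * G) $ j = - of_int (k + l)"
    using mult_low2[OF assms(2,3), of F] assms(1) by (simp add: lowf_def)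
  ultimately show ?thesis using assms by (simp add: lowf_def)
qed

lemma lowf_one: "1 \<le> j \<Longrightarrow> lowf j 0 1"
  by (simp add: lowf_def)

lemma lowf_power: "1 \<le> j \<Longrightarrow> lowf j k F \<Longrightarrow> lowf j (int m * k) (F ^ m)"
proof (induction m)
  case 0 then show ?case by (simp add: lowf_def)
next
  case (Suc m)
  have "lowf j (int m * k + k) (F ^ m * F)" using lowf_mult Suc by blast
  then show ?case by (simp add: algebra_simps)
qed

lemma lowf_base: "1 \<le> j \<Longrightarrow> lowf j 1 (1 - fps_X ^ j)"
  by (auto simp: lowf_def)

lemma lowf_gser: "1 \<le> j \<Longrightarrow> lowf j (-1) (gser j)"
  by (auto simp: lowf_def gser_def dest: dvd_imp_le)

lemma lowf_cyc: "1 \<le> j \<Longrightarrow> lowf j k (cyc_factor k j)"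
proof -
  assume j: "1 \<le> j"
  show ?thesis
  proof (cases "k \<ge> 0")
    case True
    then show ?thesis using lowf_power[OF j lowf_base[OF j], of "nat k"] j
      by (simp add: cyc_factor_alt)
  next
    case False
    then show ?thesis using lowf_power[OF j lowf_gser[OF j], of "nat (-k)"] j
      by (simp add: cyc_factor_alt)
  qed
qed

lemma Qp_Suc: "Qp c (Suc n) = Qp c n * cyc_factor (c (Suc n)) (Suc n)"
  by (simp add: prod.cl_ivl_Suc)

lemma Qp_0th: "Qp c n $ 0 = 1"
proof (induction n)
  case 0 then show ?case by simp
next
  case (Suc n)
  have "lowf (Suc n) (c (Suc n)) (cyc_factor (c (Suc n)) (Suc n))" by (rule lowf_cyc) simp
  then show ?case using Suc by (simp add: Qp_Suc lowf_def)
qed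

lemma Qp_low: "m \<le> n \<Longrightarrow> Qp c (Suc n) $ m = Qp c n $ m"
  unfolding Qp_Suc by (rule mult_low1[OF lowf_cyc]) auto

lemma Qp_top: "Qp c (Suc n) $ Suc n = Qp c n $ Suc n - of_int (c (Suc n))"
proof -
  have L: "lowf (Suc n) (c (Suc n)) (cyc_factor (c (Suc n)) (Suc n))" by (rule lowf_cyc) simp
  show ?thesis unfolding Qp_Suc using mult_low2[OF L, where F="Qp c n"] Qp_0th[of c n] by simp
qed

lemma Qp_stab: "m \<le> n \<Longrightarrow> Qp c n $ m = Qp c m $ m"
proof (induction n)
  case 0 then show ?case by simp
next
  case (Suc n)
  show ?case
  proof (cases "m = Suc n")
    case False
    then have "m \<le> n" using Suc.prems by simp
    then show ?thesis using Suc.IH Qp_low by simp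
  qed simp
qed

lemma Qp_cong: "(\<And>j. 1 \<le> j \<Longrightarrow> j \<le> n \<Longrightarrow> c j = c' j) \<Longrightarrow> Qp c n = Qp c' n"
  by (rule prod.cong) auto



definition ZZ :: "rat fps \<Rightarrow> bool" where "ZZ F \<longleftrightarrow> (\<forall>n. F $ n \<in> \<int>)"

lemma ZZ_mult: "ZZ F \<Longrightarrow> ZZ G \<Longrightarrow> ZZ (F * G)"
  unfolding ZZ_def fps_mult_nth by (auto intro!: Ints_sum Ints_mult)

lemma ZZ_one: "ZZ 1" by (auto simp: ZZ_def)

lemma ZZ_base: "ZZ (1 - fps_X ^ j)" by (auto simp: ZZ_def)

lemma ZZ_power: "ZZ F \<Longrightarrow> ZZ (F ^ m)"
  by (induction m) (auto simp: ZZ_one ZZ_mult)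

lemma ZZ_gser: "ZZ (gser j)" by (auto simp: ZZ_def gser_def)

lemma ZZ_cyc: "1 \<le> j \<Longrightarrow> ZZ (cyc_factor k j)"
  by (simp add: cyc_factor_alt ZZ_power ZZ_base ZZ_gser)

lemma ZZ_Qp: "ZZ (Qp c n)"
proof (induction n)
  case 0 then show ?case by (simp add: ZZ_one)
next
  case (Suc n) then show ?case unfolding Qp_Suc by (intro ZZ_mult ZZ_cyc) auto
qed

primrec EE :: "rat fps \<Rightarrow> nat \<Rightarrow> nat \<Rightarrow> int" where
  "EE g 0 = (\<lambda>_. 0)"
| "EE g (Suc n) = (EE g n)(Suc n := \<lfloor>Qp (EE g n) n $ Suc n - g $ Suc n\<rfloor>)"

lemma EE_mono: "j \<le> n \<Longrightarrow> EE g n j = EE g j j"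
proof (induction n)
  case 0 then show ?case by simp
next
  case (Suc n)
  show ?case
  proof (cases "j = Suc n")
    case False then show ?thesis using Suc by simp
  qed simp
qed

lemma ex_exp:
  assumes "ZZ g" "g $ 0 = 1"
  shows "\<exists>e. e 0 = 0 \<and> (\<forall>n. g $ n = Qp e n $ n)"
proof -
  define e where "e = (\<lambda>j. EE g j j)"
  have Qe: "Qp e n = Qp (EE g n) n" for n
    by (rule Qp_cong) (metis e_def EE_mono)
  have "g $ n = Qp e n $ n" for n
  proof (cases n)
    case 0 then show ?thesis using assms by simp
  next
    case (Suc k)
    have c: "Qp (EE g (Suc k)) k = Qp (EE g k) k" by (rule Qp_cong) simp
    define q where "q = Qp (EE g k) k $ Suc k - g $ Suc k"
    have "q \<in> \<int>" unfolding q_def using ZZ_Qp[of "EE g k" k] assms(1) by (simp add: ZZ_def)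
    then obtain z where "q = of_int z" by (rule Ints_cases)
    then have q: "of_int \<lfloor>q\<rfloor> = q" by simp
    have "Qp e n $ n = Qp (EE g (Suc k)) (Suc k) $ Suc k" unfolding Suc by (simp only: Qe)
    also have "\<dots> = Qp (EE g k) k $ Suc k - of_int \<lfloor>q\<rfloor>"
      unfolding Qp_top c by (simp add: q_def)
    also have "\<dots> = Qp (EE g k) k $ Suc k - q" by (simp only: q)
    also have "\<dots> = g $ n" unfolding q_def Suc by simp
    finally show ?thesis by simp
  qed
  moreover have "e 0 = 0" by (simp add: e_def)
  ultimately show ?thesis by blast
qed

lemma uniq_exp:
  assumes "\<forall>n. g $ n = Qp e n $ n" "\<forall>n. g $ n = Qp e' n $ n" "e 0 = 0" "e' 0 = 0"
  shows "e = e'"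
proof -
  have "\<forall>j\<le>n. e j = e' j" for n
  proof (induction n)
    case 0 then show ?case using assms by simp
  next
    case (Suc n)
    have "Qp e n = Qp e' n" by (rule Qp_cong) (use Suc in auto)
    moreover have "g $ Suc n = Qp e n $ Suc n - of_int (e (Suc n))"
      using assms(1) Qp_top by metis
    moreover have "g $ Suc n = Qp e' n $ Suc n - of_int (e' (Suc n))"
      using assms(2) Qp_top by metis
    ultimately have "e (Suc n) = e' (Suc n)" by simp
    then show ?case using Suc by (auto simp: le_Suc_eq)
  qed
  then show ?thesis by auto
qed

lemma sg_ZZ: "ZZ (sg_series S)"
  unfolding sg_series_def by (intro ZZ_mult) (auto simp: ZZ_def)

lemma cyc_exp_prop:
  assumes "0 \<in> S"
  shows "cyc_exp S 0 = 0 \<and> (\<forall>n. sg_series S $ n = Qp (cyc_exp S) n $ n)"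
proof -
  have "sg_series S $ 0 = 1" using assms by (simp add: sg_series_def)
  then obtain e where e: "e 0 = 0 \<and> (\<forall>n. sg_series S $ n = Qp e n $ n)"
    using ex_exp[OF sg_ZZ] by blast
  have "cyc_exp S = e" unfolding cyc_exp_def
  proof (rule the_equality)
    show "is_cyc_exp S e" using e unfolding is_cyc_exp_def by blast
    fix e' assume "is_cyc_exp S e'"
    then have h: "e' 0 = 0" "\<forall>n. sg_series S $ n = Qp e' n $ n" unfolding is_cyc_exp_def by blast+
    show "e' = e" by (rule uniq_exp[OF h(2) conjunct2[OF e] h(1) conjunct1[OF e]])
  qed
  then show ?thesis using e by simp
qed



definition SW :: "nat set \<Rightarrow> rat fps \<Rightarrow> bool" where
  "SW U F \<longleftrightarrow> (\<forall>m. F $ m \<noteq> 0 \<longrightarrow> m = 0 \<or> m \<in> U)"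

definition MJ :: "nat \<Rightarrow> rat fps \<Rightarrow> bool" where
  "MJ j F \<longleftrightarrow> (\<forall>m. F $ m \<noteq> 0 \<longrightarrow> j dvd m)"

lemma nz_term: "((F::rat fps) * G) $ m \<noteq> 0 \<Longrightarrow> \<exists>i\<le>m. F $ i \<noteq> 0 \<and> G $ (m - i) \<noteq> 0"
proof -
  assume "(F * G) $ m \<noteq> 0"
  then have "(\<Sum>i=0..m. F $ i * G $ (m - i)) \<noteq> 0" by (simp add: fps_mult_nth)
  then obtain i where "i \<in> {0..m}" "F $ i * G $ (m - i) \<noteq> 0"
    by (meson sum.neutral)
  then show ?thesis by (metis mult_zero_left mult_zero_right atLeastAtMost_iff)
qed

lemma MJ_mult: "MJ j F \<Longrightarrow> MJ j G \<Longrightarrow> MJ j (F * G)"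
  unfolding MJ_def
proof (intro allI impI)
  fix m assume F: "\<forall>m. F $ m \<noteq> 0 \<longrightarrow> j dvd m" and G: "\<forall>m. G $ m \<noteq> 0 \<longrightarrow> j dvd m"
    and "(F * G) $ m \<noteq> 0"
  then obtain i where "i \<le> m" "F $ i \<noteq> 0" "G $ (m - i) \<noteq> 0" using nz_term by blast
  then have "j dvd i" "j dvd (m - i)" using F G by auto
  then have "j dvd (i + (m - i))" by (rule dvd_add)
  then show "j dvd m" using \<open>i \<le> m\<close> by simp
qed

lemma MJ_one: "MJ j 1" by (simp add: MJ_def)
lemma MJ_power: "MJ j F \<Longrightarrow> MJ j (F ^ m)"
  by (induction m) (auto simp: MJ_one MJ_mult)
lemma MJ_base: "MJ j (1 - fps_X ^ j)" by (auto simp: MJ_def)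
lemma MJ_gser: "MJ j (gser j)" by (auto simp: MJ_def gser_def)
lemma MJ_cyc: "1 \<le> j \<Longrightarrow> MJ j (cyc_factor k j)"
  by (simp add: cyc_factor_alt MJ_power MJ_base MJ_gser)

lemma cyc_zero: "cyc_factor 0 j = 1" by (simp add: cyc_factor_def)

definition addcl :: "nat set \<Rightarrow> bool" where
  "addcl U \<longleftrightarrow> (\<forall>u\<in>U. \<forall>v\<in>U. u + v \<in> U)"

lemma addcl_mult: "addcl U \<Longrightarrow> j \<in> U \<Longrightarrow> 1 \<le> q \<Longrightarrow> q * j \<in> U"
proof (induction q)
  case 0 then show ?case by simp
next
  case (Suc q)
  show ?case
  proof (cases "q = 0")
    case True then show ?thesis using Suc by simp
  next
    case False
    then have "q * j \<in> U" using Suc by simp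
    then show ?thesis using Suc.prems unfolding addcl_def by (simp add: add.commute)
  qed
qed

lemma SW_mult: "addcl U \<Longrightarrow> SW U F \<Longrightarrow> SW U G \<Longrightarrow> SW U (F * G)"
  unfolding SW_def
proof (intro allI impI)
  fix m assume U: "addcl U" and F: "\<forall>m. F $ m \<noteq> 0 \<longrightarrow> m = 0 \<or> m \<in> U" and G: "\<forall>m. G $ m \<noteq> 0 \<longrightarrow> m = 0 \<or> m \<in> U"
    and "(F * G) $ m \<noteq> 0"
  then obtain i where i: "i \<le> m" "F $ i \<noteq> 0" "G $ (m - i) \<noteq> 0" using nz_term by blast
  then have a: "i = 0 \<or> i \<in> U" "m - i = 0 \<or> m - i \<in> U" using F G by auto
  have "m = i + (m - i)" using i by simp
  then show "m = 0 \<or> m \<in> U" using a U unfolding addcl_def by (metis add.right_neutral add_0)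
qed

lemma MJ_SW: "addcl U \<Longrightarrow> j \<in> U \<Longrightarrow> MJ j F \<Longrightarrow> SW U F"
  unfolding SW_def MJ_def
proof (intro allI impI)
  fix m assume "addcl U" "j \<in> U" "\<forall>m. F $ m \<noteq> 0 \<longrightarrow> j dvd m" "F $ m \<noteq> 0"
  then obtain q where q: "m = j * q" by blast
  show "m = 0 \<or> m \<in> U"
  proof (cases "q = 0")
    case False
    then show ?thesis using addcl_mult[OF \<open>addcl U\<close> \<open>j \<in> U\<close>, of q] q by (simp add: mult.commute)
  qed (simp add: q)
qed

lemma SW_one: "SW U 1" by (simp add: SW_def)

lemma generic_G1:
  assumes hg: "\<forall>n. g $ n = Qp c n $ n" and U: "addcl U"
    and zero: "\<forall>n. 1 \<le> n \<longrightarrow> n \<notin> U \<longrightarrow> g $ n = 0"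
  shows "1 \<le> n \<Longrightarrow> n \<notin> U \<Longrightarrow> c n = 0"
proof (induction n rule: less_induct)
  case (less n)
  then obtain k where n: "n = Suc k" by (cases n) auto
  have "SW U (Qp c k')" if "k' \<le> k" for k'
    using that
  proof (induction k')
    case 0 then show ?case by (simp add: SW_one)
  next
    case (Suc k')
    have "SW U (cyc_factor (c (Suc k')) (Suc k'))"
    proof (cases "Suc k' \<in> U")
      case True then show ?thesis using MJ_SW[OF U True MJ_cyc] by simp
    next
      case False
      then have "c (Suc k') = 0" using less.IH Suc.prems n by simp
      then show ?thesis by (simp add: cyc_zero SW_one)
    qed
    then show ?case unfolding Qp_Suc using SW_mult[OF U] Suc by simp
  qed
  then have "SW U (Qp c k)" by simp
  then have "Qp c k $ Suc k = 0" using less.prems n unfolding SW_def by auto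
  moreover have "g $ Suc k = Qp c k $ Suc k - of_int (c (Suc k))" using hg Qp_top by metis
  moreover have "g $ Suc k = 0" using zero less.prems n by simp
  ultimately show ?case using n by simp
qed

lemma generic_G2:
  assumes hg: "\<forall>n. g $ n = Qp c n $ n" and U: "addcl U"
    and zero: "\<forall>n. 1 \<le> n \<longrightarrow> n \<notin> U \<longrightarrow> g $ n = 0" and z: "0 \<notin> U"
    and nU: "n \<in> U" and ind: "\<forall>u\<in>U. \<forall>v\<in>U. u + v \<noteq> n"
  shows "of_int (c n) = - g $ n"
proof -
  have n0: "n \<noteq> 0"
  proof
    assume "n = 0" then show False using nU z by simp
  qed
  then obtain k where n: "n = Suc k" by (cases n) auto
  define P where "P F \<longleftrightarrow> SW U F \<and> F $ n = 0" for F
  have Pmult: "P (F * G)" if "P F" "P G" for F G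
  proof -
    have "SW U (F * G)" using SW_mult[OF U] that by (simp add: P_def)
    moreover have "(F * G) $ n = 0"
    proof (rule ccontr)
      assume "(F * G) $ n \<noteq> 0"
      then obtain i where i: "i \<le> n" "F $ i \<noteq> 0" "G $ (n - i) \<noteq> 0" using nz_term by blast
      have "i \<noteq> 0"
      proof
        assume "i = 0" then show False using i that by (simp add: P_def)
      qed
      moreover have "i \<noteq> n"
      proof
        assume "i = n" then show False using i that by (simp add: P_def)
      qed
      ultimately have "i \<in> U" "n - i \<in> U" using i that by (auto simp: P_def SW_def)
      moreover have "i + (n - i) = n" using i by simp
      ultimately show False using ind by blast
    qed
    ultimately show ?thesis by (simp add: P_def)
  qed
  have "P (Qp c k')" if "k' \<le> k" for k'
    using that
  proof (induction k')
    case 0 then show ?case using n0 by (simp add: P_def SW_one)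
  next
    case (Suc k')
    let ?j = "Suc k'"
    have "P (cyc_factor (c ?j) ?j)"
    proof (cases "c ?j = 0")
      case True then show ?thesis using n0 by (simp add: cyc_zero P_def SW_one)
    next
      case False
      then have jU: "?j \<in> U" using generic_G1[OF hg U zero, of ?j] by auto
      have MJ: "MJ ?j (cyc_factor (c ?j) ?j)" by (rule MJ_cyc) simp
      have "cyc_factor (c ?j) ?j $ n = 0"
      proof (rule ccontr)
        assume "cyc_factor (c ?j) ?j $ n \<noteq> 0"
        then obtain q where q: "n = ?j * q" using MJ unfolding MJ_def by blast
        have "q \<noteq> 0" using q n0 by auto
        moreover have "q \<noteq> 1" using q Suc.prems n by auto
        ultimately have "q - 1 \<ge> 1" by simp
        then have "(q - 1) * ?j \<in> U" by (rule addcl_mult[OF U jU])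
        moreover have "?j + (q - 1) * ?j = n" using q \<open>q \<noteq> 0\<close> by (cases q) auto
        ultimately show False using ind jU by blast
      qed
      then show ?thesis using MJ_SW[OF U jU MJ] by (simp add: P_def)
    qed
    then show ?case unfolding Qp_Suc using Pmult Suc by simp
  qed
  then have "Qp c k $ n = 0" by (simp add: P_def)
  moreover have "g $ Suc k = Qp c k $ Suc k - of_int (c (Suc k))" using hg Qp_top by metis
  ultimately show ?thesis using n by simp
qed



definition fzB :: "nat set \<Rightarrow> nat \<Rightarrow> (nat \<Rightarrow> nat) set" where
  "fzB B s = {z. (\<forall>a. a \<notin> B \<longrightarrow> z a = 0) \<and> (\<Sum>a\<in>B. z a * a) = s}"

lemma fin_fzB:
  assumes finB: "finite B" and B0: "0 \<notin> B"
  shows "finite (fzB B s)"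
proof -
  have "fzB B s \<subseteq> (\<lambda>g a. if a \<in> B then g a else 0) ` (PiE B (\<lambda>_. {..s}))"
  proof
    fix z assume z: "z \<in> fzB B s"
    have le: "z a \<le> s" if "a \<in> B" for a
    proof -
      have "a \<noteq> 0" using that B0 by metis
      then have "z a \<le> z a * a" by simp
      also have "\<dots> \<le> (\<Sum>b\<in>B. z b * b)" using that finB by (intro member_le_sum) auto
      finally show ?thesis using z by (simp add: fzB_def)
    qed
    have "z = (\<lambda>a. if a \<in> B then restrict z B a else 0)" using z by (auto simp: fzB_def)
    moreover have "restrict z B \<in> PiE B (\<lambda>_. {..s})" using le by auto
    ultimately show "z \<in> (\<lambda>g a. if a \<in> B then g a else 0) ` (PiE B (\<lambda>_. {..s}))" by blast
  qed
  moreover have "finite (PiE B (\<lambda>_. {..s}))" using finB by (simp add: finite_PiE)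
  ultimately show ?thesis by (meson finite_imageI finite_subset)
qed

lemma fzB_empty: "fzB {} s = (if s = 0 then {\<lambda>_. 0} else {})"
  by (auto simp: fzB_def)

lemma card_fzB_insert:
  assumes finB: "finite B" and B0: "0 \<notin> B" and a0: "a \<noteq> 0" and aB: "a \<notin> B"
  shows "card (fzB (insert a B) s) = card (fzB B s) + (if a \<le> s then card (fzB (insert a B) (s - a)) else 0)"
proof -
  let ?F = "fzB (insert a B) s"
  have sumeq: "(\<Sum>b\<in>insert a B. z b * b) = z a * a + (\<Sum>b\<in>B. z b * b)" for z
    using finB aB by simp
  have finF: "finite ?F" using fin_fzB[of "insert a B"] finB B0 a0 by simp
  have F0: "{z \<in> ?F. z a = 0} = fzB B s"
    using aB by (auto simp: fzB_def sumeq; metis)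
  have split: "?F = {z \<in> ?F. z a = 0} \<union> {z \<in> ?F. z a \<noteq> 0}" by blast
  have "card ?F = card {z \<in> ?F. z a = 0} + card {z \<in> ?F. z a \<noteq> 0}"
    by (subst split, rule card_Un_disjoint) (use finF in auto)
  moreover have "card {z \<in> ?F. z a \<noteq> 0} = (if a \<le> s then card (fzB (insert a B) (s - a)) else 0)"
  proof (cases "a \<le> s")
    case True
    have "bij_betw (\<lambda>z. z(a := z a - 1)) {z \<in> ?F. z a \<noteq> 0} (fzB (insert a B) (s - a))"
    proof (rule bij_betw_byWitness[where f'="\<lambda>w. w(a := w a + 1)"])
      show "\<forall>z\<in>{z \<in> ?F. z a \<noteq> 0}. (z(a := z a - 1))(a := (z(a := z a - 1)) a + 1) = z" by auto
      show "\<forall>w\<in>fzB (insert a B) (s - a). (w(a := w a + 1))(a := (w(a := w a + 1)) a - 1) = w" by auto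
      show "(\<lambda>z. z(a := z a - 1)) ` {z \<in> ?F. z a \<noteq> 0} \<subseteq> fzB (insert a B) (s - a)"
      proof
        fix w assume "w \<in> (\<lambda>z. z(a := z a - 1)) ` {z \<in> ?F. z a \<noteq> 0}"
        then obtain z where z: "z \<in> ?F" "z a \<noteq> 0" "w = z(a := z a - 1)" by blast
        have "(\<Sum>b\<in>B. w b * b) = (\<Sum>b\<in>B. z b * b)" using aB z(3) by (intro sum.cong) auto
        moreover have "z a * a = (z a - 1) * a + a" using z(2) by (cases "z a") auto
        ultimately show "w \<in> fzB (insert a B) (s - a)"
          using z unfolding fzB_def by (auto simp: sumeq)
      qed
      show "(\<lambda>w. w(a := w a + 1)) ` fzB (insert a B) (s - a) \<subseteq> {z \<in> ?F. z a \<noteq> 0}"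
      proof
        fix z assume "z \<in> (\<lambda>w. w(a := w a + 1)) ` fzB (insert a B) (s - a)"
        then obtain w where w: "w \<in> fzB (insert a B) (s - a)" "z = w(a := w a + 1)" by blast
        have "(\<Sum>b\<in>B. z b * b) = (\<Sum>b\<in>B. w b * b)" using aB w(2) by (intro sum.cong) auto
        moreover have "w a * a + (\<Sum>b\<in>B. w b * b) = s - a" using w(1) unfolding fzB_def by (simp add: sumeq)
        ultimately have "z a * a + (\<Sum>b\<in>B. z b * b) = s" using w(2) True by simp
        then show "z \<in> {z \<in> ?F. z a \<noteq> 0}" using w unfolding fzB_def by (auto simp: sumeq)
      qed
    qed
    then show ?thesis using True by (simp add: bij_betw_same_card)
  next
    case False
    have "{z \<in> ?F. z a \<noteq> 0} = {}"
    proof (rule equals0I)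
      fix z assume z: "z \<in> {z \<in> ?F. z a \<noteq> 0}"
      then have "z a * a + (\<Sum>b\<in>B. z b * b) = s" unfolding fzB_def by (simp add: sumeq)
      moreover have "a \<le> z a * a" using z by simp
      ultimately show False using False by linarith
    qed
    then show ?thesis using False by (metis card.empty)
  qed
  ultimately show ?thesis using F0 by simp
qed

definition Dser :: "nat set \<Rightarrow> rat fps" where
  "Dser B = Abs_fps (\<lambda>s. of_nat (card (fzB B s)))"

lemma Dser_insert:
  assumes "finite B" "0 \<notin> B" "a \<noteq> 0" "a \<notin> B"
  shows "Dser (insert a B) * (1 - fps_X ^ a) = Dser B"
proof (rule fps_ext)
  fix s
  have "(Dser (insert a B) * (1 - fps_X ^ a)) $ s = Dser (insert a B) $ s - (Dser (insert a B) * fps_X ^ a) $ s"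
    by (simp add: algebra_simps)
  also have "\<dots> = Dser B $ s"
    using card_fzB_insert[OF assms, of s] by (auto simp: Dser_def fps_X_power_mult_right_nth)
  finally show "(Dser (insert a B) * (1 - fps_X ^ a)) $ s = Dser B $ s" .
qed

lemma Dser_empty: "Dser {} = 1"
  by (rule fps_ext) (simp add: Dser_def fzB_empty)

lemma Dser_prod: "finite B \<Longrightarrow> 0 \<notin> B \<Longrightarrow> Dser B * (\<Prod>a\<in>B. (1 - fps_X ^ a)) = 1"
proof (induction B rule: finite_induct)
  case empty then show ?case by (simp add: Dser_empty)
next
  case (insert a B)
  have B0: "0 \<notin> B" and a0: "a \<noteq> 0" using insert.prems by (metis insertCI)+
  have D1: "Dser (insert a B) * (1 - fps_X ^ a) = Dser B"
    by (rule Dser_insert[OF insert(1) B0 a0 insert(2)])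
  have "Dser (insert a B) * (\<Prod>b\<in>insert a B. (1 - fps_X ^ b)) =
        Dser (insert a B) * ((1 - fps_X ^ a) * (\<Prod>b\<in>B. (1 - fps_X ^ b)))"
    using insert(1,2) by simp
  also have "\<dots> = (Dser (insert a B) * (1 - fps_X ^ a)) * (\<Prod>b\<in>B. (1 - fps_X ^ b))"
    by (simp only: mult.assoc)
  also have "\<dots> = 1" unfolding D1 by (rule insert.IH[OF B0])
  finally show ?case .
qed



lemma cf_succ: "1 \<le> j \<Longrightarrow> cyc_factor (k + 1) j = cyc_factor k j * (1 - fps_X ^ j)"
proof -
  assume j: "1 \<le> j"
  show ?thesis
  proof (cases "k \<ge> 0")
    case True
    then have "nat (k + 1) = Suc (nat k)" by simp
    then show ?thesis using True j by (simp add: cyc_factor_alt mult.commute)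
  next
    case False
    show ?thesis
    proof (cases "k = -1")
      case True
      then show ?thesis using j gser_mult[OF j] by (simp add: cyc_factor_alt)
    next
      case False2: False
      have "nat (-k) = Suc (nat (- (k + 1)))" using False False2 by simp
      then have "cyc_factor k j * (1 - fps_X ^ j) = gser j ^ nat (- (k + 1)) * (gser j * (1 - fps_X ^ j))"
        using False j by (simp add: cyc_factor_alt mult_ac)
      also have "\<dots> = cyc_factor (k + 1) j" using gser_mult[OF j] False False2 j by (simp add: cyc_factor_alt)
      finally show ?thesis by simp
    qed
  qed
qed

lemma cf_pred: "1 \<le> j \<Longrightarrow> cyc_factor (k - 1) j = cyc_factor k j * gser j"
proof -
  assume j: "1 \<le> j"
  have "cyc_factor k j * gser j = cyc_factor ((k - 1) + 1) j * gser j" by simp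
  also have "\<dots> = cyc_factor (k - 1) j * (gser j * (1 - fps_X ^ j))"
    unfolding cf_succ[OF j] by (simp add: mult_ac)
  also have "\<dots> = cyc_factor (k - 1) j" using gser_mult[OF j] by simp
  finally show ?thesis by simp
qed

definition eqto :: "nat \<Rightarrow> rat fps \<Rightarrow> rat fps \<Rightarrow> bool" where
  "eqto n F G \<longleftrightarrow> (\<forall>m\<le>n. F $ m = G $ m)"

lemma eqto_mult: "eqto n F G \<Longrightarrow> eqto n (F * H) (G * H)"
  unfolding eqto_def fps_mult_nth by (auto intro!: sum.cong)

lemma eqto_mult_left: "eqto n F G \<Longrightarrow> eqto n (H * F) (H * G)"
  using eqto_mult[of n F G H] by (simp add: mult.commute)

lemma eqto_trans: "eqto n F G \<Longrightarrow> eqto n G H \<Longrightarrow> eqto n F H"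
  by (simp add: eqto_def)

lemma eqto_prod1: "finite X \<Longrightarrow> (\<forall>a\<in>X. n < a) \<Longrightarrow> eqto n (\<Prod>a\<in>X. (1 - fps_X ^ a)) 1"
proof (induction X rule: finite_induct)
  case empty then show ?case by (simp add: eqto_def)
next
  case (insert a X)
  have h1: "eqto n (1 - fps_X ^ a) 1" using insert.prems by (auto simp: eqto_def)
  have "eqto n ((1 - fps_X ^ a) * (\<Prod>b\<in>X. (1 - fps_X ^ b))) (1 * (\<Prod>b\<in>X. (1 - fps_X ^ b)))"
    by (rule eqto_mult[OF h1])
  then have "eqto n ((1 - fps_X ^ a) * (\<Prod>b\<in>X. (1 - fps_X ^ b))) 1"
    using insert by (auto simp: eqto_def)
  then show ?case using insert by simp
qed

lemma prod_base_0: "(\<Prod>a\<in>X. (1 - fps_X ^ a :: rat fps)) $ 0 = (if (\<exists>a\<in>X. a = 0) \<and> finite X then 0 else 1)"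
proof (cases "finite X")
  case True then show ?thesis
    by (induction X rule: finite_induct) auto
qed simp

context nsg
begin

definition HS :: "rat fps" where "HS = Abs_fps (\<lambda>n. if n \<in> S then 1 else 0)"
definition PP :: "rat fps" where "PP = (\<Prod>a\<in>AT. (1 - fps_X ^ a))"
definition KK :: "rat fps" where "KK = HS * PP"

lemma fz_fzB: "fz s = fzB AT s" by (simp add: fz_def fzB_def)

lemma AT0: "0 \<notin> AT" using atoms_pos by metis

lemma Dn_PP: "Dser AT * PP = 1"
  unfolding PP_def by (rule Dser_prod[OF finA AT0])

lemma HS_eq: "HS = KK * Dser AT"
proof -
  have "KK * Dser AT = HS * (Dser AT * PP)" by (simp add: KK_def mult_ac)
  then show ?thesis using Dn_PP by simp
qed

lemma PP0: "PP $ 0 = 1" unfolding PP_def using AT0 prod_base_0 by simp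

lemma KK0: "KK $ 0 = 1" using PP0 ns_0[OF ns] by (simp add: KK_def HS_def)

lemma Dn_nth: "Dser AT $ k = of_nat (card (fz k))" by (simp add: Dser_def fz_fzB)

lemma Dn_nz: "Dser AT $ k \<noteq> 0 \<Longrightarrow> k \<in> S"
proof -
  assume "Dser AT $ k \<noteq> 0"
  then have "card (fz k) \<noteq> 0" by (simp add: Dn_nth)
  then have "fz k \<noteq> {}" by auto
  then show "k \<in> S" using fz_S by blast
qed

lemma Dn0: "Dser AT $ 0 = 1" using fz0 by (simp add: Dn_nth)

lemma HS_split: "1 \<le> n \<Longrightarrow> HS $ n = Dser AT $ n + KK $ n + (\<Sum>t\<in>{1..<n}. KK $ t * Dser AT $ (n - t))"
proof -
  assume n: "1 \<le> n"
  have "HS $ n = (\<Sum>t=0..n. KK $ t * Dser AT $ (n - t))" by (simp add: HS_eq fps_mult_nth)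
  also have "\<dots> = KK $ 0 * Dser AT $ n + KK $ n * Dser AT $ (n - n) + (\<Sum>t\<in>{1..<n}. KK $ t * Dser AT $ (n - t))"
    using sum_split_ends[OF n, where g="\<lambda>t. KK $ t * Dser AT $ (n - t)"] by simp
  finally show ?thesis using KK0 Dn0 by simp
qed

lemma K1: "1 \<le> n \<Longrightarrow> n \<notin> D2 \<Longrightarrow> KK $ n = 0"
proof (induction n rule: less_induct)
  case (less n)
  have mid: "(\<Sum>t\<in>{1..<n}. KK $ t * Dser AT $ (n - t)) = 0"
  proof (rule sum.neutral, rule ballI)
    fix t assume t: "t \<in> {1..<n}"
    show "KK $ t * Dser AT $ (n - t) = 0"
    proof (rule ccontr)
      assume "KK $ t * Dser AT $ (n - t) \<noteq> 0"
      then have a: "KK $ t \<noteq> 0" "Dser AT $ (n - t) \<noteq> 0" by auto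
      then have "t \<in> D2" using less.IH[of t] t by auto
      moreover have "n - t \<in> S" using Dn_nz a by blast
      ultimately have "t + (n - t) \<in> D2" by (rule D2_up)
      then show False using t less.prems by simp
    qed
  qed
  have e: "HS $ n = Dser AT $ n + KK $ n" using HS_split[OF less.prems(1)] mid by simp
  show ?case
  proof (cases "n \<in> S")
    case True
    then have "Dser AT $ n = 1" using fz_unique[OF True less.prems(2)] by (simp add: Dn_nth)
    then show ?thesis using e True by (simp add: HS_def)
  next
    case False
    then have "fz n = {}" using fz_S by blast
    then have "Dser AT $ n = 0" by (simp add: Dn_nth)
    then show ?thesis using e False by (simp add: HS_def)
  qed
qed

lemma K2: "m \<in> mD2 \<Longrightarrow> KK $ m = 1 - of_nat (card (fz m))"
proof -
  assume m: "m \<in> mD2"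
  then have mD: "m \<in> D2" by (simp add: minimal_elements_def)
  have m1: "1 \<le> m" using mD zero_notin_D2 by (cases m) auto
  have mid: "(\<Sum>t\<in>{1..<m}. KK $ t * Dser AT $ (m - t)) = 0"
  proof (rule sum.neutral, rule ballI)
    fix t assume t: "t \<in> {1..<m}"
    show "KK $ t * Dser AT $ (m - t) = 0"
    proof (rule ccontr)
      assume "KK $ t * Dser AT $ (m - t) \<noteq> 0"
      then have a: "KK $ t \<noteq> 0" "Dser AT $ (m - t) \<noteq> 0" by auto
      then have "t \<in> D2" using K1[of t] t by auto
      moreover have "le_S S t m" using Dn_nz a t by (auto simp: le_S_def)
      ultimately have "t = m" using m unfolding minimal_elements_def by blast
      then show False using t by simp
    qed
  qed
  have "HS $ m = 1" using D2_S[OF mD] by (simp add: HS_def)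
  then show ?thesis using HS_split[OF m1] mid Dn_nth[of m] by simp
qed

definition cc :: "nat \<Rightarrow> int" where
  "cc j = (if j = 0 then 0 else cyc_exp S j + (if j \<in> AT then 1 else 0) - (if j = 1 then 1 else 0))"

lemma cf_cc: "1 \<le> j \<Longrightarrow> cyc_factor (cc j) j =
   cyc_factor (cyc_exp S j) j * (if j \<in> AT then 1 - fps_X ^ j else 1) * (if j = 1 then gser 1 else 1)"
proof -
  assume j: "1 \<le> j"
  let ?e = "cyc_exp S j"
  consider "j \<in> AT" "j = 1" | "j \<in> AT" "j \<noteq> 1" | "j \<notin> AT" "j = 1" | "j \<notin> AT" "j \<noteq> 1" by blast
  then show ?thesis
  proof cases
    case 1
    then have "cc j = ?e" by (simp add: cc_def)
    moreover have "(1 - fps_X ^ j) * gser 1 = (1 :: rat fps)" using gser_mult[of 1] 1 by (simp add: mult.commute)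
    ultimately show ?thesis using 1 by (simp add: mult.assoc)
  next
    case 2
    then have "cc j = ?e + 1" using j by (simp add: cc_def)
    then show ?thesis using 2 cf_succ[OF j] by simp
  next
    case 3
    then have "cc j = ?e - 1" by (simp add: cc_def)
    then show ?thesis using 3 cf_pred[OF j] by simp
  next
    case 4
    then have "cc j = ?e" using j by (simp add: cc_def)
    then show ?thesis using 4 by simp
  qed
qed

lemma KK_Qp: "KK $ n = Qp cc n $ n"
proof (cases "n = 0")
  case True then show ?thesis using KK0 by simp
next
  case False
  then have n1: "1 \<le> n" by simp
  let ?e = "cyc_exp S"
  define Pn where "Pn = (\<Prod>a\<in>{j\<in>{1..n}. j \<in> AT}. (1 - fps_X ^ a :: rat fps))"
  define R where "R = (\<Prod>a\<in>AT - {1..n}. (1 - fps_X ^ a :: rat fps))"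
  have "Qp cc n = (\<Prod>j\<in>{1..n}. cyc_factor (?e j) j * (if j \<in> AT then 1 - fps_X ^ j else 1) * (if j = 1 then gser 1 else 1))"
    by (rule prod.cong) (auto simp: cf_cc)
  also have "\<dots> = Qp ?e n * (\<Prod>j\<in>{1..n}. (if j \<in> AT then 1 - fps_X ^ j else 1)) * (\<Prod>j\<in>{1..n}. (if j = 1 then gser 1 else 1))"
    by (simp add: prod.distrib)
  also have "(\<Prod>j\<in>{1..n}. (if j \<in> AT then 1 - fps_X ^ j else 1)) = Pn"
    unfolding Pn_def by (rule prod.inter_filter[symmetric]) simp
  also have "(\<Prod>j\<in>{1..n}. (if j = 1 then gser 1 else 1)) = gser 1"
    using n1 by (simp add: prod.delta)
  finally have Q: "Qp cc n = Qp ?e n * Pn * gser 1" .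
  have "PP = (\<Prod>a\<in>AT \<inter> {1..n}. (1 - fps_X ^ a)) * R"
    unfolding PP_def R_def by (rule prod.Int_Diff[OF finA])
  moreover have "AT \<inter> {1..n} = {j\<in>{1..n}. j \<in> AT}" by auto
  ultimately have PPe: "PP = Pn * R" by (simp add: Pn_def)
  have HSe: "HS = gser 1 * sg_series S"
  proof -
    have "gser 1 * sg_series S = (gser 1 * (1 - fps_X ^ 1)) * HS"
      unfolding sg_series_def HS_def by (simp only: power_one_right mult.assoc)
    also have "\<dots> = HS" using gser_mult[of 1] by simp
    finally show ?thesis by simp
  qed
  have K: "KK = (sg_series S * (gser 1 * Pn)) * R" by (simp add: KK_def HSe PPe mult_ac)
  have R1: "eqto n R 1" unfolding R_def
  proof (rule eqto_prod1)
    show "finite (AT - {1..n})" using finA by simp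
    show "\<forall>a\<in>AT - {1..n}. n < a"
    proof
      fix a assume a: "a \<in> AT - {1..n}"
      then have "a \<noteq> 0" using atoms_pos by blast
      then show "n < a" using a by simp
    qed
  qed
  have sgQ: "eqto n (sg_series S) (Qp ?e n)"
    unfolding eqto_def using cyc_exp_prop[OF ns_0[OF ns]] Qp_stab by metis
  have t1: "eqto n KK ((sg_series S * (gser 1 * Pn)) * 1)"
    unfolding K by (rule eqto_mult_left[OF R1])
  have t2: "eqto n ((sg_series S * (gser 1 * Pn)) * 1) (Qp ?e n * (gser 1 * Pn))"
    using eqto_mult[OF sgQ, of "gser 1 * Pn"] by simp
  have "eqto n KK (Qp ?e n * (gser 1 * Pn))" by (rule eqto_trans[OF t1 t2])
  then have "KK $ n = (Qp ?e n * (gser 1 * Pn)) $ n" by (simp add: eqto_def)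
  also have "Qp ?e n * (gser 1 * Pn) = Qp cc n" unfolding Q by (simp add: mult_ac)
  finally show ?thesis .
qed

end


context nsg
begin

lemma addcl_D2: "addcl D2"
  unfolding addcl_def using D2_up D2_S by blast

lemma cc_G1: "1 \<le> n \<Longrightarrow> n \<notin> D2 \<Longrightarrow> cc n = 0"
  using generic_G1[of KK cc D2 n] KK_Qp addcl_D2 K1 by blast

lemma cc_G2: "m \<in> mD2 \<Longrightarrow> of_int (cc m) = (of_nat (card (fz m)) :: rat) - 1"
proof -
  assume m: "m \<in> mD2"
  then have mD: "m \<in> D2" by (simp add: minimal_elements_def)
  have ind: "\<forall>u\<in>D2. \<forall>v\<in>D2. u + v \<noteq> m"
  proof (intro ballI notI)
    fix u v assume u: "u \<in> D2" and v: "v \<in> D2" and uv: "u + v = m"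
    have "le_S S u m" using uv D2_S[OF v] by (auto simp: le_S_def)
    then have "u = m" using m u unfolding minimal_elements_def by blast
    then have "v = 0" using uv by simp
    then show False using v zero_notin_D2 by simp
  qed
  have "of_int (cc m) = - KK $ m"
    by (rule generic_G2[OF _ addcl_D2 _ zero_notin_D2 mD ind]) (use KK_Qp K1 in auto)
  then show ?thesis using K2[OF m] by simp
qed

lemma one_atom: "1 \<in> S \<Longrightarrow> 1 \<in> AT"
  unfolding atoms_def by auto

lemma cycE: "cyc_E S = {d. 2 \<le> d \<and> cyc_exp S d \<noteq> 0 \<and> d \<notin> AT}"
  unfolding cyc_E_def min_gens_atoms[OF ns] ..

lemma cc_eq: "2 \<le> d \<Longrightarrow> d \<notin> AT \<Longrightarrow> cc d = cyc_exp S d"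
  by (simp add: cc_def)

lemma cycE_D2: "cyc_E S \<subseteq> D2"
proof
  fix d assume "d \<in> cyc_E S"
  then have d: "2 \<le> d" "cyc_exp S d \<noteq> 0" "d \<notin> AT" by (auto simp: cycE)
  then have "cc d \<noteq> 0" using cc_eq by simp
  then show "d \<in> D2" using cc_G1[of d] d by auto
qed

lemma mD2_fact: "m \<in> mD2 \<Longrightarrow> cyc_exp S m = int (card (fz m)) - 1 \<and> 2 \<le> m \<and> m \<notin> AT"
proof -
  assume m: "m \<in> mD2"
  then have mD: "m \<in> D2" by (simp add: minimal_elements_def)
  have nA: "m \<notin> AT" using atom_notin_D2 mD by blast
  have "m \<noteq> 0" using mD zero_notin_D2 by metis
  moreover have "m \<noteq> 1"
  proof
    assume "m = 1"
    then have "1 \<in> AT" using one_atom D2_S[OF mD] by simp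
    then show False using nA \<open>m = 1\<close> by simp
  qed
  ultimately have m2: "2 \<le> m" by simp
  have "of_int (cc m) = (of_nat (card (fz m)) :: rat) - 1" by (rule cc_G2[OF m])
  then have "cc m = int (card (fz m)) - 1"
    by (metis of_int_diff of_int_eq_iff of_int_of_nat_eq of_int_1)
  then show ?thesis using cc_eq[OF m2 nA] m2 nA by simp
qed

lemma mD2_cycE: "mD2 \<subseteq> cyc_E S"
proof
  fix m assume m: "m \<in> mD2"
  then have "2 \<le> card (fz m)" using D2_card by (simp add: minimal_elements_def)
  then have "cyc_exp S m \<noteq> 0" using mD2_fact[OF m] by simp
  then show "m \<in> cyc_E S" using mD2_fact[OF m] by (simp add: cycE)
qed

lemma main:
  "minimal_elements S (Betti S) = minimal_elements S (cyc_E S)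
   \<and> (\<forall>\<alpha> \<in> minimal_elements S (cyc_E S).
        cyc_exp S \<alpha> = int (num_fact S \<alpha>) - 1
      \<and> cyc_exp S \<alpha> = int (num_isolated S \<alpha>) - 1)"
proof -
  have E: "minimal_elements S (cyc_E S) = mD2" by (rule minimal_eq[OF cycE_D2 mD2_cycE])
  show ?thesis
    unfolding E min_Betti
    using mD2_fact mD2_isolated by (simp add: num_fact_def fact_eq)
qed

end

theorem theorem5p3:
  fixes S :: "nat set"
  assumes "numerical_semigroup S"
  shows "minimal_elements S (Betti S) = minimal_elements S (cyc_E S)
         \<and> (\<forall>\<alpha> \<in> minimal_elements S (cyc_E S).
              cyc_exp S \<alpha> = int (num_fact S \<alpha>) - 1
            \<and> cyc_exp S \<alpha> = int (num_isolated S \<alpha>) - 1)"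
proof -
  interpret nsg S by (unfold_locales) (rule assms)
  show ?thesis by (rule main)
qed


end
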